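(* Let $\mathbb A$ be a unital associative algebra over a field of characteristic zero and $X,Y\in\mathbb A$. Then in $\mathbb A[[t]]$ $$e^{tX}e^{tY}=1_{\mathbb A}+\sum_{r=1}^\infty\sum_{n_1,\dots,n_r=1}^\infty\frac{1}{n_r(n_r+n_{r-1})\cdots(n_r+\cdots+n_1)}\,D_{n_1}\cdots D_{n_r},$$ where $D_n=\frac{t^n}{(n-1)!}\mathrm{ad}_X^{n-1}(X+Y)$ for each $n\ge1$.
   Context: $\mathrm{ad}_AB=AB-BA$; the sum converges $t$-adically since $D_n\in t^n\mathbb A$. *)

theory Defs
  imports Main "HOL-Computational_Algebra.Formal_Power_Series"
begin

definition algebra_over :: "('k::field \<Rightarrow> 'a::ring_1 \<Rightarrow> 'a) \<Rightarrow> bool" where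
  "algebra_over scale \<longleftrightarrow> module scale \<and>
     (\<forall>c x y. scale c (x * y) = scale c x * y \<and> scale c (x * y) = x * scale c y)"

definition ad :: "'a::ring \<Rightarrow> 'a \<Rightarrow> 'a" where
  "ad A B = A * B - B * A"

definition fps_scale :: "('k \<Rightarrow> 'a \<Rightarrow> 'a) \<Rightarrow> 'k \<Rightarrow> 'a fps \<Rightarrow> 'a fps" where
  "fps_scale scale c P = Abs_fps (\<lambda>n. scale c (fps_nth P n))"

definition fps_exp_alg :: "('k::field \<Rightarrow> 'a::ring_1 \<Rightarrow> 'a) \<Rightarrow> 'a \<Rightarrow> 'a fps" where
  "fps_exp_alg scale X = Abs_fps (\<lambda>n. scale (1 / of_nat (fact n)) (X ^ n))"

definition Dterm :: "('k::field \<Rightarrow> 'a::ring_1 \<Rightarrow> 'a) \<Rightarrow> 'a \<Rightarrow> 'a \<Rightarrow> nat \<Rightarrow> 'a fps" where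
  "Dterm scale X Y n =
     fps_const (scale (1 / of_nat (fact (n - 1))) ((ad X ^^ (n - 1)) (X + Y))) * fps_X ^ n"

definition tadic_summable :: "('i \<Rightarrow> 'a::zero fps) \<Rightarrow> 'i set \<Rightarrow> bool" where
  "tadic_summable F I \<longleftrightarrow> (\<forall>N. finite {i \<in> I. fps_nth (F i) N \<noteq> 0})"

definition tadic_sum :: "('i \<Rightarrow> 'a::comm_monoid_add fps) \<Rightarrow> 'i set \<Rightarrow> 'a fps" where
  "tadic_sum F I = Abs_fps (\<lambda>N. \<Sum>i\<in>{i \<in> I. fps_nth (F i) N \<noteq> 0}. fps_nth (F i) N)"

definition pos_tuples :: "nat list set" where
  "pos_tuples = {ns. ns \<noteq> [] \<and> (\<forall>n\<in>set ns. 1 \<le> n)}"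

text \<open>n_r (n_r + n_{r-1}) ... (n_r + ... + n_1) = product of the suffix sums.\<close>
definition suffix_denom :: "nat list \<Rightarrow> nat" where
  "suffix_denom ns = (\<Prod>j<length ns. sum_list (drop j ns))"

definition bch_term :: "('k::field \<Rightarrow> 'a::ring_1 \<Rightarrow> 'a) \<Rightarrow> 'a \<Rightarrow> 'a \<Rightarrow> nat list \<Rightarrow> 'a fps" where
  "bch_term scale X Y ns =
     fps_scale scale (1 / of_nat (suffix_denom ns)) (prod_list (map (Dterm scale X Y) ns))"

end

theory Submission imports Defs begin

definition sc :: "('k::field \<Rightarrow> 'a::ring_1 \<Rightarrow> 'a) \<Rightarrow> 'k \<Rightarrow> 'a" where
  "sc scale c = scale c 1"

context
  fixes scale :: "'k::field_char_0 \<Rightarrow> 'a::ring_1 \<Rightarrow> 'a"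
  assumes alg: "algebra_over scale"
begin

lemma mod: "module scale" using alg unfolding algebra_over_def by blast

lemma scale_eq_left: "scale c x = sc scale c * x"
  using alg unfolding algebra_over_def sc_def by (metis mult_1)

lemma scale_eq_right: "scale c x = x * sc scale c"
  using alg unfolding algebra_over_def sc_def by (metis mult_1_right)

lemma sc_comm: "sc scale c * x = x * sc scale c"
  using scale_eq_left scale_eq_right by metis

lemma sc_mult: "sc scale (a * b) = sc scale a * sc scale b"
proof -
  have "sc scale (a*b) = scale a (scale b 1)" unfolding sc_def by (simp only: module.scale_scale[OF mod])
  also have "\<dots> = sc scale a * sc scale b" by (simp only: scale_eq_left[of a "scale b 1"] sc_def)
  finally show ?thesis .
qed

lemma sc_add: "sc scale (a + b) = sc scale a + sc scale b"
  unfolding sc_def using module.scale_left_distrib[OF mod] by simp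

lemma sc_one: "sc scale 1 = 1"
  unfolding sc_def using module.scale_one[OF mod] by simp

lemma sc_of_nat: "sc scale (of_nat n) = of_nat n"
  unfolding sc_def
  by (induction n) (simp_all add: module.scale_left_distrib[OF mod] module.scale_zero_left[OF mod] module.scale_one[OF mod])

lemma sc_of_nat_inv: "n \<noteq> 0 \<Longrightarrow> of_nat n * sc scale (1 / of_nat n) = 1"
  by (metis sc_of_nat sc_mult sc_one of_nat_eq_0_iff nonzero_divide_eq_eq mult.commute divide_self_if times_divide_eq_right mult_1_right)

lemma of_nat_cancel: assumes "n \<noteq> 0" "of_nat n * (x::'a) = 0" shows "x = 0"
proof -
  have "x = (sc scale (1 / of_nat n) * of_nat n) * x"
    using sc_of_nat_inv[OF assms(1)] sc_comm by (metis mult_1)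
  also have "\<dots> = sc scale (1 / of_nat n) * (of_nat n * x)" by (simp add: mult.assoc)
  finally show ?thesis using assms(2) by simp
qed

lemma fact_step: "of_nat (Suc k) * sc scale (1 / fact (Suc k)) = sc scale (1 / fact k)"
proof -
  have "of_nat (Suc k) * sc scale (1 / fact (Suc k)) = sc scale (of_nat (Suc k) * (1 / fact (Suc k)))"
    by (simp only: sc_mult sc_of_nat)
  also have "of_nat (Suc k) * (1 / fact (Suc k)) = (1 / fact k :: 'k)"
  proof -
    have "(of_nat (Suc k)::'k) \<noteq> 0" by (rule of_nat_neq_0)
    moreover have "(fact k::'k) \<noteq> 0" by simp
    moreover have "(fact k::'k) * of_nat (Suc k) \<noteq> 0" by (simp only: mult_eq_0_iff of_nat_eq_0_iff fact_nonzero) simp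
    then have "(fact k::'k) + fact k * of_nat k \<noteq> 0" by (simp add: algebra_simps)
    ultimately show ?thesis unfolding fact_Suc[of k] of_nat_mult by (simp add: field_simps)
  qed
  finally show ?thesis .
qed


lemma E_nth: "fps_nth (fps_exp_alg scale X) n = sc scale (1 / fact n) * X ^ n"
  unfolding fps_exp_alg_def by (simp add: scale_eq_left)

lemma deriv_E_left: "fps_deriv (fps_exp_alg scale X) = fps_const X * fps_exp_alg scale X"
proof (rule fps_ext)
  fix n
  have "of_nat (n + 1) * (sc scale (1 / fact (Suc n)) * X ^ Suc n)
      = (of_nat (Suc n) * sc scale (1 / fact (Suc n))) * X ^ Suc n"
    by (simp add: mult.assoc)
  also have "\<dots> = sc scale (1 / fact n) * (X * X ^ n)" by (simp only: fact_step power_Suc)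
  also have "\<dots> = X * (sc scale (1 / fact n) * X ^ n)"
    by (metis mult.assoc sc_comm)
  finally show "fps_nth (fps_deriv (fps_exp_alg scale X)) n = fps_nth (fps_const X * fps_exp_alg scale X) n"
    by (simp add: E_nth)
qed

lemma E_comm: "fps_const X * fps_exp_alg scale X = fps_exp_alg scale X * fps_const X"
proof (rule fps_ext)
  fix n
  have "X * (sc scale (1 / fact n) * X ^ n) = (sc scale (1 / fact n) * X ^ n) * X"
    by (metis mult.assoc sc_comm power_commutes)
  then show "fps_nth (fps_const X * fps_exp_alg scale X) n = fps_nth (fps_exp_alg scale X * fps_const X) n"
    by (simp add: E_nth)
qed

lemma uniq: fixes G :: "'a fps" assumes "fps_deriv G = fps_const A * G" "fps_nth G 0 = 0" shows "G = 0"
proof (rule fps_ext)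
  fix n show "fps_nth G n = fps_nth 0 n"
  proof (induction n)
    case 0 then show ?case using assms(2) by simp
  next
    case (Suc n)
    have "of_nat (Suc n) * fps_nth G (Suc n) = fps_nth (fps_deriv G) n" by simp
    also have "\<dots> = A * fps_nth G n" using assms(1) by simp
    also have "\<dots> = 0" using Suc by simp
    finally show ?case using of_nat_cancel[of "Suc n" "fps_nth G (Suc n)"] by simp
  qed
qed

definition Bser :: "'a \<Rightarrow> 'a \<Rightarrow> 'a fps" where
  "Bser X Z = Abs_fps (\<lambda>k. sc scale (1 / fact k) * (ad X ^^ k) Z)"

lemma Bser_nth: "fps_nth (Bser X Z) k = sc scale (1 / fact k) * (ad X ^^ k) Z"
  unfolding Bser_def by simp

lemma deriv_B: "fps_deriv (Bser X Z) = fps_const X * Bser X Z - Bser X Z * fps_const X"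
proof (rule fps_ext)
  fix k
  define W where "W = (ad X ^^ k) Z"
  have "of_nat (k + 1) * (sc scale (1 / fact (Suc k)) * (ad X ^^ Suc k) Z)
      = (of_nat (Suc k) * sc scale (1 / fact (Suc k))) * (X * W - W * X)"
    by (simp add: mult.assoc W_def ad_def)
  also have "\<dots> = X * (sc scale (1 / fact k) * W) - (sc scale (1 / fact k) * W) * X"
    by (simp only: fact_step right_diff_distrib) (metis mult.assoc sc_comm)
  finally show "fps_nth (fps_deriv (Bser X Z)) k = fps_nth (fps_const X * Bser X Z - Bser X Z * fps_const X) k"
    by (simp add: Bser_nth W_def)
qed

lemma B_E: "Bser X Z * fps_exp_alg scale X = fps_exp_alg scale X * fps_const Z"
proof -
  let ?E = "fps_exp_alg scale X" and ?B = "Bser X Z"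
  define G where "G = ?B * ?E - ?E * fps_const Z"
  have "fps_deriv G = (fps_const X * ?B - ?B * fps_const X) * ?E + ?B * (?E * fps_const X)
        - (fps_const X * ?E) * fps_const Z"
    unfolding G_def by (simp add: deriv_B deriv_E_left E_comm)
  also have "\<dots> = fps_const X * G"
    unfolding G_def by (simp add: algebra_simps E_comm[symmetric])
  finally have "G = 0"
    by (rule uniq) (simp add: G_def Bser_nth E_nth sc_one)
  then show ?thesis unfolding G_def by simp
qed

lemma F_deriv: "fps_deriv (fps_exp_alg scale X * fps_exp_alg scale Y)
   = Bser X (X + Y) * (fps_exp_alg scale X * fps_exp_alg scale Y)"
proof -
  let ?EX = "fps_exp_alg scale X" and ?EY = "fps_exp_alg scale Y"
  have "fps_deriv (?EX * ?EY) = ?EX * (fps_const Y * ?EY) + (?EX * fps_const X) * ?EY"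
    by (simp add: deriv_E_left E_comm)
  also have "\<dots> = (?EX * fps_const (X + Y)) * ?EY"
  proof -
    have c: "fps_const (X+Y) = fps_const X + fps_const Y" by (simp add: fps_eq_iff)
    show ?thesis unfolding c by (simp only: distrib_left distrib_right mult.assoc add.commute)
  qed
  also have "\<dots> = Bser X (X + Y) * (?EX * ?EY)"
    by (simp add: B_E[symmetric] mult.assoc)
  finally show ?thesis .
qed


end

definition Cset :: "nat \<Rightarrow> nat list set" where
  "Cset N = {ns. (\<forall>n\<in>set ns. 1 \<le> n) \<and> sum_list ns = N}"

lemma sum_list_ge_length: "\<forall>n\<in>set ns. 1 \<le> n \<Longrightarrow> length ns \<le> sum_list (ns::nat list)"
  by (induction ns) auto

lemma elem_le_sum_list: "n \<in> set ns \<Longrightarrow> n \<le> sum_list (ns::nat list)"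
  by (induction ns) auto

lemma finite_Cset: "finite (Cset N)"
proof (rule finite_subset)
  show "Cset N \<subseteq> {xs. set xs \<subseteq> {0..N} \<and> length xs \<le> N}"
    unfolding Cset_def using sum_list_ge_length elem_le_sum_list by fastforce
  show "finite {xs. set xs \<subseteq> {0..N} \<and> length xs \<le> N}"
    by (rule finite_lists_length_le) simp
qed

lemma Cset_0: "Cset 0 = {[]}"
proof -
  have "ns = []" if "\<forall>n\<in>set ns. 1 \<le> n" "sum_list ns = 0" for ns :: "nat list"
    using sum_list_ge_length[OF that(1)] that(2) by simp
  then show ?thesis unfolding Cset_def by auto
qed

lemma Cset_Suc: "Cset N = (\<Union>n\<in>{1..N}. Cons n ` Cset (N - n))" if "N \<ge> 1"
proof
  show "Cset N \<subseteq> (\<Union>n\<in>{1..N}. Cons n ` Cset (N - n))"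
  proof
    fix ns assume ns: "ns \<in> Cset N"
    then have "ns \<noteq> []" using that unfolding Cset_def by auto
    then obtain n r where nr: "ns = n # r" by (cases ns) auto
    have "n \<in> {1..N}" "r \<in> Cset (N-n)" using ns nr unfolding Cset_def by auto
    then show "ns \<in> (\<Union>n\<in>{1..N}. Cons n ` Cset (N - n))"
      using nr by blast
  qed
  show "(\<Union>n\<in>{1..N}. Cons n ` Cset (N - n)) \<subseteq> Cset N"
    unfolding Cset_def by auto
qed

lemma suffix_denom_Cons: "suffix_denom (n # r) = (n + sum_list r) * suffix_denom r"
  unfolding suffix_denom_def length_Cons prod.lessThan_Suc_shift by simp

lemma suffix_denom_Nil: "suffix_denom [] = 1"
  unfolding suffix_denom_def by simp

definition cc :: "('k::field \<Rightarrow> 'a::ring_1 \<Rightarrow> 'a) \<Rightarrow> (nat \<Rightarrow> 'a) \<Rightarrow> nat list \<Rightarrow> 'a" where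
  "cc scale a ns = sc scale (1 / of_nat (suffix_denom ns)) * prod_list (map a ns)"

definition hh :: "('k::field \<Rightarrow> 'a::ring_1 \<Rightarrow> 'a) \<Rightarrow> (nat \<Rightarrow> 'a) \<Rightarrow> nat \<Rightarrow> 'a" where
  "hh scale a N = (\<Sum>ns\<in>Cset N. cc scale a ns)"

context
  fixes scale :: "'k::field_char_0 \<Rightarrow> 'a::ring_1 \<Rightarrow> 'a"
  assumes alg: "algebra_over scale"
  fixes a :: "nat \<Rightarrow> 'a"
begin

lemma hh_0: "hh scale a 0 = 1"
  unfolding hh_def Cset_0 cc_def by (simp add: suffix_denom_Nil sc_one[OF alg])

lemma cc_Cons: "cc scale a (n # r) = sc scale (1 / of_nat (n + sum_list r)) * (a n * cc scale a r)"
proof -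
  have "cc scale a (n # r) = (sc scale (1 / of_nat (n + sum_list r)) * sc scale (1 / of_nat (suffix_denom r)))
        * (a n * prod_list (map a r))"
    unfolding cc_def suffix_denom_Cons by (simp add: sc_mult[OF alg, symmetric])
  also have "\<dots> = sc scale (1 / of_nat (n + sum_list r)) * (a n * cc scale a r)"
    unfolding cc_def by (metis mult.assoc sc_comm[OF alg])
  finally show ?thesis .
qed

lemma hh_Suc: "hh scale a N = sc scale (1 / of_nat N) * (\<Sum>n\<in>{1..N}. a n * hh scale a (N - n))" if "N \<ge> 1"
proof -
  have "hh scale a N = (\<Sum>n\<in>{1..N}. \<Sum>ns\<in>Cons n ` Cset (N - n). cc scale a ns)"
    unfolding hh_def Cset_Suc[OF that]
    by (rule sum.UNION_disjoint) (auto simp: finite_Cset)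
  also have "\<dots> = (\<Sum>n\<in>{1..N}. \<Sum>r\<in>Cset (N - n). cc scale a (n # r))"
    by (rule sum.cong) (simp_all add: sum.reindex)
  also have "\<dots> = (\<Sum>n\<in>{1..N}. \<Sum>r\<in>Cset (N - n). sc scale (1 / of_nat N) * (a n * cc scale a r))"
  proof (rule sum.cong[OF refl], rule sum.cong[OF refl])
    fix n r assume "n \<in> {1..N}" "r \<in> Cset (N - n)"
    then have "n + sum_list r = N" unfolding Cset_def by auto
    then show "cc scale a (n # r) = sc scale (1 / of_nat N) * (a n * cc scale a r)" by (simp add: cc_Cons)
  qed
  also have "\<dots> = sc scale (1 / of_nat N) * (\<Sum>n\<in>{1..N}. a n * hh scale a (N - n))"
    unfolding hh_def by (simp add: sum_distrib_left)
  finally show ?thesis .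
qed

end

lemma Dterm_eq: fixes scale :: "'k::field_char_0 \<Rightarrow> 'a::ring_1 \<Rightarrow> 'a"
  shows "algebra_over scale \<Longrightarrow> Dterm scale X Y n =
   fps_const (sc scale (1 / fact (n - 1)) * (ad X ^^ (n - 1)) (X + Y)) * fps_X ^ n"
  unfolding Dterm_def by (simp add: scale_eq_left[of scale])

lemma prod_const_X: fixes a :: "nat \<Rightarrow> 'a::ring_1"
  shows "prod_list (map (\<lambda>n. fps_const (a n) * fps_X ^ n) ns)
     = fps_const (prod_list (map a ns)) * fps_X ^ sum_list ns"
proof (induction ns)
  case Nil then show ?case by simp
next
  case (Cons n ns)
  define P where "P = fps_const (prod_list (map a ns))"
  have c: "fps_X ^ n * (P * fps_X ^ sum_list ns) = P * (fps_X ^ n * fps_X ^ sum_list ns)"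
    using fps_mult_fps_X_power_commute[of n P] by (simp only: mult.assoc[symmetric])
  have "fps_const (a n) * fps_X ^ n * (fps_const (prod_list (map a ns)) * fps_X ^ sum_list ns)
      = fps_const (a n) * fps_const (prod_list (map a ns)) * (fps_X ^ n * fps_X ^ sum_list ns)"
    unfolding P_def[symmetric] by (simp only: mult.assoc c)
  also have "\<dots> = fps_const (prod_list (map a (n # ns))) * fps_X ^ sum_list (n # ns)"
    by (simp add: power_add)
  finally show ?case using Cons by simp
qed

theorem theorem4p1:
  fixes scale :: "'k::field_char_0 \<Rightarrow> 'a::ring_1 \<Rightarrow> 'a"
    and X Y :: 'a
  assumes "algebra_over scale"
  shows "tadic_summable (bch_term scale X Y) pos_tuples \<and>
         fps_exp_alg scale X * fps_exp_alg scale Y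
           = 1 + tadic_sum (bch_term scale X Y) pos_tuples"
proof -
  note alg = assms
  define a where "a n = sc scale (1 / fact (n - 1)) * (ad X ^^ (n - 1)) (X + Y)" for n
  define B where "B = Bser scale X (X + Y)"
  define F where "F = fps_exp_alg scale X * fps_exp_alg scale Y"
  have Fh: "fps_nth F N = hh scale a N" for N
  proof (induction N rule: less_induct)
    case (less N)
    show ?case
    proof (cases N)
      case 0
      then show ?thesis unfolding F_def using alg
        by (simp add: E_nth sc_one hh_0)
    next
      case (Suc M)
      have d: "of_nat (Suc M) * fps_nth F (Suc M) = (\<Sum>i=0..M. fps_nth B i * fps_nth F (M - i))"
      proof -
        have "of_nat (Suc M) * fps_nth F (Suc M) = fps_nth (fps_deriv F) M" by simp
        also have "\<dots> = fps_nth (B * F) M" unfolding F_def B_def using F_deriv[OF alg] by simp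
        finally show ?thesis by (simp add: fps_mult_nth)
      qed
      have inv: "sc scale (1 / of_nat (Suc M)) * of_nat (Suc M) = 1"
        using sc_of_nat_inv[OF alg, of "Suc M"] sc_comm[OF alg, of "1 / of_nat (Suc M)" "of_nat (Suc M)"] by simp
      have "fps_nth F (Suc M) = sc scale (1 / of_nat (Suc M)) * (of_nat (Suc M) * fps_nth F (Suc M))"
        by (simp only: mult.assoc[symmetric] inv mult_1)
      also have "\<dots> = sc scale (1 / of_nat (Suc M)) * (\<Sum>i=0..M. a (Suc i) * hh scale a (M - i))"
      proof -
        have "(\<Sum>i=0..M. fps_nth B i * fps_nth F (M - i)) = (\<Sum>i=0..M. a (Suc i) * hh scale a (M - i))"
        proof -
          have aS: "a (Suc i) = fps_nth B i" for i by (simp add: a_def B_def Bser_nth[OF alg])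
          show ?thesis by (rule sum.cong[OF refl]) (simp add: aS less Suc)
        qed
        then show ?thesis using d by simp
      qed
      also have "\<dots> = hh scale a (Suc M)"
      proof -
        have "(\<Sum>n\<in>{1..Suc M}. a n * hh scale a (Suc M - n)) = (\<Sum>i\<in>{0..M}. a (Suc i) * hh scale a (M - i))"
          using sum.shift_bounds_cl_Suc_ivl[of "\<lambda>n. a n * hh scale a (Suc M - n)" 0 M]
          by (simp only: One_nat_def diff_Suc_Suc)
        then show ?thesis using hh_Suc[OF alg, of "Suc M" a] by simp
      qed
      finally show ?thesis using Suc by simp
    qed
  qed
  have D: "Dterm scale X Y = (\<lambda>n. fps_const (a n) * fps_X ^ n)"
    by (rule ext) (simp only: Dterm_eq[OF alg] a_def)
  have bnth: "fps_nth (bch_term scale X Y ns) N = (if sum_list ns = N then cc scale a ns else 0)" for ns N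
    unfolding bch_term_def fps_scale_def D prod_const_X cc_def
    by (simp add: scale_eq_left[OF alg] cc_def)
  have sub: "{ns \<in> pos_tuples. fps_nth (bch_term scale X Y ns) N \<noteq> 0} \<subseteq> Cset N - {[]}" for N
    unfolding pos_tuples_def Cset_def using bnth by (auto split: if_splits)
  have summ: "tadic_summable (bch_term scale X Y) pos_tuples"
    unfolding tadic_summable_def using sub finite_Cset by (meson finite_Diff finite_subset)
  have tnth: "fps_nth (tadic_sum (bch_term scale X Y) pos_tuples) N = (\<Sum>ns\<in>Cset N - {[]}. cc scale a ns)" for N
  proof -
    have "fps_nth (tadic_sum (bch_term scale X Y) pos_tuples) N
       = (\<Sum>ns\<in>{ns \<in> pos_tuples. fps_nth (bch_term scale X Y ns) N \<noteq> 0}. fps_nth (bch_term scale X Y ns) N)"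
      unfolding tadic_sum_def by simp
    also have "\<dots> = (\<Sum>ns\<in>Cset N - {[]}. fps_nth (bch_term scale X Y ns) N)"
      by (rule sum.mono_neutral_left) (use sub finite_Cset in \<open>auto simp: pos_tuples_def Cset_def\<close>)
    also have "\<dots> = (\<Sum>ns\<in>Cset N - {[]}. cc scale a ns)"
      by (rule sum.cong[OF refl]) (simp add: bnth Cset_def)
    finally show ?thesis .
  qed
  have "F = 1 + tadic_sum (bch_term scale X Y) pos_tuples"
  proof (rule fps_ext)
    fix N
    show "fps_nth F N = fps_nth (1 + tadic_sum (bch_term scale X Y) pos_tuples) N"
    proof (cases "N = 0")
      case True
      then show ?thesis using Fh[of 0] hh_0[OF alg] by (simp add: tnth Cset_0)
    next
      case False
      then have "Cset N - {[]} = Cset N" unfolding Cset_def by auto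
      then show ?thesis using False Fh[of N] by (simp add: tnth hh_def)
    qed
  qed
  then show ?thesis using summ F_def by simp
qed

end
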